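(* Let $w\ge 4$ and $u=w-2$. Then $$\sum_{\substack{a+b=w-1\\ a\ge 2,\ b\ge1}} T(a,b,1)=2T(u,2)+4\Big(\zeta(u,\bar1,\bar1)+\zeta(\bar u,1,1)-\zeta(\bar u,1,\bar1)-\zeta(u,\bar1,1)\Big).$$
   Context: Multiple $T$-values: for positive integers $s_1,\dots,s_d$ with $s_1>1$, $T(s_1,\dots,s_d)=\sum_{m_1>\dots>m_d>0,\ m_j\equiv d-j+1\ (\mathrm{mod}\ 2)}\frac{2^d}{m_1^{s_1}\cdots m_d^{s_d}}$. Euler sums: $\zeta(s_1,\dots,s_d;z_1,\dots,z_d)=\sum_{n_1>\dots>n_d>0}\frac{z_1^{n_1}\cdots z_d^{n_d}}{n_1^{s_1}\cdots n_d^{s_d}}$, $z_j\in\{\pm1\}$, convergent iff $(s_1,z_1)\ne(1,1)$; a bar over the $j$-th argument means $z_j=-1$, no bar means $z_j=1$. *)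

theory Defs
  imports Complex_Main
begin

definition dec_tuples :: "nat \<Rightarrow> nat \<Rightarrow> nat list set" where
  "dec_tuples d N = {ns. length ns = d \<and> sorted_wrt (>) ns \<and> (\<forall>n\<in>set ns. 0 < n \<and> n < N)}"

text \<open>Euler sum zeta(s_1,...,s_d; z_1,...,z_d) = sum over n_1 > ... > n_d > 0 of
  prod_j z_j^{n_j} / n_j^{s_j}, defined as the limit of the truncations n_1 < N
  (the usual meaning of the iterated series).\<close>
definition euler_zeta :: "nat list \<Rightarrow> int list \<Rightarrow> real" where
  "euler_zeta s z = lim (\<lambda>N. \<Sum>ns\<in>dec_tuples (length s) N.
      \<Prod>j<length s. (real_of_int (z ! j)) ^ (ns ! j) / (real (ns ! j)) ^ (s ! j))"

text \<open>Multiple T-value: sum over m_1 > ... > m_d > 0 with m_j = d - j + 1 (mod 2)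
  (1-indexed j; i.e. index j (0-indexed) has parity d - j) of 2^d / prod m_j^{s_j}.\<close>
definition multT :: "nat list \<Rightarrow> real" where
  "multT s = lim (\<lambda>N. \<Sum>ns\<in>{ns\<in>dec_tuples (length s) N.
        \<forall>j<length s. (ns ! j) mod 2 = (length s - j) mod 2}.
      2 ^ length s / (\<Prod>j<length s. (real (ns ! j)) ^ (s ! j)))"

end

theory Submission
  imports Defs "HOL-Analysis.Analysis"
begin


lemma dec_tuples_0: "dec_tuples 0 N = {[]}"
  by (auto simp: dec_tuples_def)

lemma dec_tuples_Suc:
  "dec_tuples (Suc d) N = (\<Union>n\<in>{0<..<N}. (\<lambda>t. n # t) ` dec_tuples d n)"
proof (intro equalityI subsetI)
  fix ns assume "ns \<in> dec_tuples (Suc d) N"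
  then obtain n t where ns: "ns = n # t" and "length t = d" "sorted_wrt (>) (n#t)"
     "\<forall>x\<in>set (n#t). 0 < x \<and> x < N"
    unfolding dec_tuples_def by (cases ns) auto
  then show "ns \<in> (\<Union>n\<in>{0<..<N}. (\<lambda>t. n # t) ` dec_tuples d n)"
    unfolding dec_tuples_def by (auto intro!: bexI[of _ n] image_eqI[of _ _ t])
next
  fix ns assume "ns \<in> (\<Union>n\<in>{0<..<N}. (\<lambda>t. n # t) ` dec_tuples d n)"
  then show "ns \<in> dec_tuples (Suc d) N"
    unfolding dec_tuples_def by fastforce
qed

lemma finite_dec_tuples: "finite (dec_tuples d N)"
proof -
  have "dec_tuples d N \<subseteq> {xs. set xs \<subseteq> {..<N} \<and> length xs = d}"
    unfolding dec_tuples_def by auto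
  moreover have "finite {xs. set xs \<subseteq> {..<N} \<and> length xs = d}"
    by (rule finite_lists_length_eq) auto
  ultimately show ?thesis by (rule finite_subset)
qed

lemma sum_dec_tuples_Suc:
  "(\<Sum>ns\<in>dec_tuples (Suc d) N. f ns) = (\<Sum>n\<in>{0<..<N}. \<Sum>t\<in>dec_tuples d n. f (n # t))"
  unfolding dec_tuples_Suc
  apply (subst sum.UNION_disjoint)
  apply (auto simp: finite_dec_tuples)
  apply (subst sum.reindex)
  apply (auto intro: inj_onI)
  done

lemma sum_dec_tuples_3:
  "(\<Sum>ns\<in>dec_tuples 3 N. f ns) = (\<Sum>a\<in>{0<..<N}. \<Sum>b\<in>{0<..<a}. \<Sum>c\<in>{0<..<b}. f [a,b,c])"
  by (simp add: numeral_3_eq_3 sum_dec_tuples_Suc dec_tuples_0)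

lemma sum_dec_tuples_2:
  "(\<Sum>ns\<in>dec_tuples 2 N. f ns) = (\<Sum>a\<in>{0<..<N}. \<Sum>b\<in>{0<..<a}. f [a,b])"
  by (simp add: numeral_2_eq_2 sum_dec_tuples_Suc dec_tuples_0)

lemma sum_pos_lessThan:
  fixes g :: "nat \<Rightarrow> real"
  assumes "g 0 = 0" shows "(\<Sum>a\<in>{0<..<N}. g a) = (\<Sum>a<N. g a)"
  by (rule sum.mono_neutral_left) (use assms in auto)

lemma lim_suminf: "summable f \<Longrightarrow> lim (\<lambda>N. \<Sum>a<N. f a) = suminf (f :: nat \<Rightarrow> real)"
  by (rule limI) (rule summable_LIMSEQ)

definition EZ :: "nat \<Rightarrow> nat \<Rightarrow> nat \<Rightarrow> int \<Rightarrow> int \<Rightarrow> int \<Rightarrow> nat \<Rightarrow> real" where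
  "EZ s0 s1 s2 z0 z1 z2 a = (\<Sum>b\<in>{0<..<a}. \<Sum>c\<in>{0<..<b}.
      (of_int z0)^a / (real a)^s0 * ((of_int z1)^b / (real b)^s1) * ((of_int z2)^c / (real c)^s2))"

lemma euler_zeta_3:
  assumes "summable (EZ s0 s1 s2 z0 z1 z2)"
  shows "euler_zeta [s0,s1,s2] [z0,z1,z2] = suminf (EZ s0 s1 s2 z0 z1 z2)"
proof -
  have "(\<lambda>N. \<Sum>ns\<in>dec_tuples (length [s0,s1,s2]) N.
      \<Prod>j<length [s0,s1,s2]. (real_of_int ([z0,z1,z2] ! j)) ^ (ns ! j) / (real (ns ! j)) ^ ([s0,s1,s2] ! j))
     = (\<lambda>N. \<Sum>a<N. EZ s0 s1 s2 z0 z1 z2 a)"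
    apply (rule ext)
    apply (simp only: length_Cons list.size numeral_3_eq_3[symmetric] sum_dec_tuples_3)
    apply (subst sum_pos_lessThan[symmetric])
     apply (simp add: EZ_def)
    apply (simp add: EZ_def numeral_3_eq_3 mult.assoc)
    done
  then show ?thesis unfolding euler_zeta_def using lim_suminf[OF assms] by simp
qed

definition MT :: "nat \<Rightarrow> nat \<Rightarrow> nat \<Rightarrow> real" where
  "MT k l a = (\<Sum>b\<in>{0<..<a}. \<Sum>c\<in>{0<..<b}.
      (if odd a \<and> even b \<and> odd c then 8 / ((real a)^k * (real b)^l * real c) else 0))"

lemma term3: "(if (\<forall>j<3. ([a,b,c] ! j) mod 2 = (3 - j) mod 2)
   then 2 ^ 3 / (\<Prod>j<3. real ([a,b,c] ! j) ^ ([k,l,1] ! j)) else 0)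
  = (if odd a \<and> even b \<and> odd c then 8 / ((real a)^k * (real b)^l * real c) else (0::real))"
proof -
  have e: "(\<forall>j<3. ([a,b,c] ! j) mod 2 = (3 - j) mod 2) \<longleftrightarrow> odd a \<and> even b \<and> odd c"
  proof -
    have "(\<forall>j<3. ([a,b,c] ! j) mod 2 = (3 - j) mod 2) \<longleftrightarrow> a mod 2 = 1 \<and> b mod 2 = 0 \<and> c mod 2 = 1"
      by (simp add: numeral_3_eq_3 less_Suc_eq all_conj_distrib)
    then show ?thesis by (simp add: odd_iff_mod_2_eq_one even_iff_mod_2_eq_zero)
  qed
  have p: "(\<Prod>j<3. real ([a,b,c] ! j) ^ ([k,l,1] ! j)) = (real a)^k * (real b)^l * real c"
    by (simp add: numeral_3_eq_3 mult.assoc)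
  show ?thesis by (simp only: e p) simp
qed

lemma term2: "(if (\<forall>j<2. ([a,b] ! j) mod 2 = (2 - j) mod 2)
   then 2 ^ 2 / (\<Prod>j<2. real ([a,b] ! j) ^ ([k,2] ! j)) else 0)
  = (if even a \<and> odd b then 4 / ((real a)^k * (real b)^2) else (0::real))"
proof -
  have e: "(\<forall>j<2. ([a,b] ! j) mod 2 = (2 - j) mod 2) \<longleftrightarrow> even a \<and> odd b"
  proof -
    have "(\<forall>j<2. ([a,b] ! j) mod 2 = (2 - j) mod 2) \<longleftrightarrow> a mod 2 = 0 \<and> b mod 2 = 1"
      by (simp add: numeral_2_eq_2 less_Suc_eq all_conj_distrib)
    then show ?thesis by (simp add: odd_iff_mod_2_eq_one even_iff_mod_2_eq_zero)
  qed
  have p: "(\<Prod>j<2. real ([a,b] ! j) ^ ([k,2] ! j)) = (real a)^k * (real b)^2"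
    by (simp add: numeral_2_eq_2)
  show ?thesis by (simp only: e p) simp
qed

lemma multT_3:
  assumes "summable (MT k l)"
  shows "multT [k,l,1] = suminf (MT k l)"
proof -
  have "(\<lambda>N. \<Sum>ns\<in>{ns\<in>dec_tuples (length [k,l,1]) N.
        \<forall>j<length [k,l,1]. (ns ! j) mod 2 = (length [k,l,1] - j) mod 2}.
      2 ^ length [k,l,1] / (\<Prod>j<length [k,l,1]. (real (ns ! j)) ^ ([k,l,1] ! j)))
     = (\<lambda>N. \<Sum>a<N. MT k l a)"
    apply (rule ext)
    apply (subst sum.inter_filter)
     apply (simp add: finite_dec_tuples)
    apply (simp only: length_Cons list.size numeral_3_eq_3[symmetric] sum_dec_tuples_3)
    apply (subst sum_pos_lessThan[symmetric])
     apply (simp add: MT_def)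
    apply (simp add: MT_def term3)
    done
  then show ?thesis unfolding multT_def using lim_suminf[OF assms] by simp
qed

definition MT2 :: "nat \<Rightarrow> nat \<Rightarrow> real" where
  "MT2 k a = (\<Sum>b\<in>{0<..<a}. (if even a \<and> odd b then 4 / ((real a)^k * (real b)^2) else 0))"

lemma multT_2:
  assumes "summable (MT2 k)"
  shows "multT [k,2] = suminf (MT2 k)"
proof -
  have "(\<lambda>N. \<Sum>ns\<in>{ns\<in>dec_tuples (length [k,2]) N.
        \<forall>j<length [k,2]. (ns ! j) mod 2 = (length [k,2] - j) mod 2}.
      2 ^ length [k,2] / (\<Prod>j<length [k,2]. (real (ns ! j)) ^ ([k,2] ! j)))
     = (\<lambda>N. \<Sum>a<N. MT2 k a)"
    apply (rule ext)
    apply (subst sum.inter_filter)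
     apply (simp add: finite_dec_tuples)
    apply (simp only: length_Cons list.size numeral_2_eq_2[symmetric] sum_dec_tuples_2)
    apply (subst sum_pos_lessThan[symmetric])
     apply (simp add: MT2_def)
    apply (simp add: MT2_def term2)
    done
  then show ?thesis unfolding multT_def using lim_suminf[OF assms] by simp
qed



definition rho :: "nat \<Rightarrow> real" where "rho n = real n powr (-4/3)"

lemma rho_summable: "summable rho"
  unfolding rho_def by (subst summable_real_powr_iff) simp

lemma rho_nonneg: "rho n \<ge> 0" by (simp add: rho_def)

lemma powr_43: 
  fixes x :: real assumes "x \<ge> 1" shows "x powr (4/3) = x * x powr (1/3)"
proof -
  have "x powr (4/3) = x powr (1 + 1/3)" by simp
  also have "\<dots> = x powr 1 * x powr (1/3)" by (rule powr_add)
  finally show ?thesis using assms by simp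
qed

lemma maj3_real:
  fixes a b c :: real
  assumes "1 \<le> c" "c \<le> a" "1 \<le> b" "b \<le> a"
  shows "1 / (a^2 * b * c) \<le> a powr (-4/3) * b powr (-4/3) * c powr (-4/3)"
proof -
  have a1: "a \<ge> 1" using assms by simp
  have "b powr (1/3) \<le> a powr (1/3)" using assms by (intro powr_mono2) auto
  moreover have "c powr (1/3) \<le> a powr (1/3)" using assms by (intro powr_mono2) auto
  ultimately have "b powr (1/3) * c powr (1/3) \<le> a powr (1/3) * a powr (1/3)"
    by (intro mult_mono) auto
  then have 1: "a powr (4/3) * b * c * (b powr (1/3) * c powr (1/3)) \<le> a powr (4/3) * b * c * (a powr (1/3) * a powr (1/3))"
    using assms by (intro mult_left_mono) auto
  have 2: "a powr (4/3) * (a powr (1/3) * a powr (1/3)) = a powr (4/3 + 1/3 + 1/3)"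
    by (simp only: powr_add mult.assoc)
  have 3: "a powr (4/3 + 1/3 + 1/3) = a^2" using a1 by (simp add: powr_numeral)
  have 4: "a powr (4/3) * b powr (4/3) * c powr (4/3) = a powr (4/3) * b * c * (b powr (1/3) * c powr (1/3))"
    using assms by (simp add: powr_43 mult_ac)
  have 5: "a powr (4/3) * b * c * (a powr (1/3) * a powr (1/3)) = a^2 * b * c"
    using 2 3 by (simp add: mult_ac)
  have le: "a powr (4/3) * b powr (4/3) * c powr (4/3) \<le> a^2 * b * c"
    using 1 unfolding 4 5 .
  have pos: "0 < a powr (4/3) * b powr (4/3) * c powr (4/3)" using assms by simp
  have "1 / (a^2 * b * c) \<le> 1 / (a powr (4/3) * b powr (4/3) * c powr (4/3))"
    using le pos by (intro divide_left_mono) auto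
  also have "\<dots> = a powr (-4/3) * b powr (-4/3) * c powr (-4/3)"
    using assms by (simp add: powr_minus divide_simps)
  finally show ?thesis .
qed

lemma maj2_real:
  fixes a b :: real
  assumes "1 \<le> a" "1 \<le> b"
  shows "1 / (a^2 * b^2) \<le> a powr (-4/3) * b powr (-4/3)"
proof -
  have "a powr (4/3) \<le> a powr 2" using assms by (intro powr_mono) auto
  moreover have "b powr (4/3) \<le> b powr 2" using assms by (intro powr_mono) auto
  ultimately have le: "a powr (4/3) * b powr (4/3) \<le> a^2 * b^2"
    using assms by (simp add: powr_numeral mult_mono)
  have pos: "0 < a powr (4/3) * b powr (4/3)" using assms by simp
  have "1 / (a^2 * b^2) \<le> 1 / (a powr (4/3) * b powr (4/3))"
    using le pos by (intro divide_left_mono) auto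
  also have "\<dots> = a powr (-4/3) * b powr (-4/3)"
    using assms by (simp add: powr_minus divide_simps)
  finally show ?thesis .
qed

definition M3 :: "nat \<Rightarrow> real" where
  "M3 a = (\<Sum>b\<in>{0<..<a}. \<Sum>c\<in>{0<..<b}. 1 / ((real a)^2 * real b * real c))"

definition M2 :: "nat \<Rightarrow> real" where
  "M2 a = (\<Sum>b\<in>{0<..<a}. 1 / ((real a)^2 * (real b)^2))"

lemma sum_rho_le: "(\<Sum>b\<in>A. rho b) \<le> suminf rho" if "finite A"
  using that by (intro sum_le_suminf rho_summable) (auto simp: rho_nonneg)

lemma M3_le: "M3 a \<le> suminf rho ^ 2 * rho a"
proof -
  have "M3 a \<le> (\<Sum>b\<in>{0<..<a}. \<Sum>c\<in>{0<..<b}. rho a * rho b * rho c)"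
    unfolding M3_def rho_def
    by (intro sum_mono maj3_real) auto
  also have "\<dots> = rho a * (\<Sum>b\<in>{0<..<a}. rho b * (\<Sum>c\<in>{0<..<b}. rho c))"
    by (simp add: sum_distrib_left mult_ac)
  also have "\<dots> \<le> rho a * (\<Sum>b\<in>{0<..<a}. rho b * suminf rho)"
    by (intro mult_left_mono sum_mono sum_rho_le) (auto simp: rho_nonneg)
  also have "\<dots> = rho a * suminf rho * (\<Sum>b\<in>{0<..<a}. rho b)"
    by (simp add: sum_distrib_left mult.commute mult.left_commute)
  also have "\<dots> \<le> rho a * suminf rho * suminf rho"
    by (intro mult_left_mono sum_rho_le mult_nonneg_nonneg suminf_nonneg rho_summable)
       (auto simp: rho_nonneg)
  finally show ?thesis by (simp add: power2_eq_square mult_ac)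
qed

lemma M2_le: "M2 a \<le> suminf rho * rho a"
proof -
  have "M2 a \<le> (\<Sum>b\<in>{0<..<a}. rho a * rho b)"
    unfolding M2_def rho_def
    by (intro sum_mono maj2_real) auto
  also have "\<dots> = rho a * (\<Sum>b\<in>{0<..<a}. rho b)"
    by (simp add: sum_distrib_left)
  also have "\<dots> \<le> rho a * suminf rho"
    by (intro mult_left_mono sum_rho_le) (auto simp: rho_nonneg)
  finally show ?thesis by (simp add: mult_ac)
qed

lemma M3_nonneg: "M3 a \<ge> 0" unfolding M3_def by (intro sum_nonneg) auto
lemma M2_nonneg: "M2 a \<ge> 0" unfolding M2_def by (intro sum_nonneg) auto

lemma M3_summable: "summable M3"
  by (rule summable_comparison_test'[where g = "\<lambda>a. suminf rho ^ 2 * rho a" and N = 0])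
     (auto intro: summable_mult rho_summable simp: M3_le M3_nonneg)

lemma M2_summable: "summable M2"
  by (rule summable_comparison_test'[where g = "\<lambda>a. suminf rho * rho a" and N = 0])
     (auto intro: summable_mult rho_summable simp: M2_le M2_nonneg)



lemma pow_ge: "k \<ge> 2 \<Longrightarrow> a > 0 \<Longrightarrow> real a ^ 2 \<le> real a ^ k"
  by (intro power_increasing) auto

lemma pow_ge1: "l \<ge> 1 \<Longrightarrow> b > 0 \<Longrightarrow> real b \<le> real b ^ l"
  using power_increasing[of 1 l "real b"] by auto

lemma abs_int_pow: "\<bar>z\<bar> = 1 \<Longrightarrow> \<bar>(of_int z :: real) ^ n\<bar> = 1"
  by (simp add: power_abs flip: of_int_abs)

lemma EZ_bound:
  assumes "u \<ge> 2" "\<bar>z0\<bar> = 1" "\<bar>z1\<bar> = 1" "\<bar>z2\<bar> = 1"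
  shows "norm (EZ u 1 1 z0 z1 z2 a) \<le> M3 a"
proof -
  have "norm (EZ u 1 1 z0 z1 z2 a) \<le> (\<Sum>b\<in>{0<..<a}. \<Sum>c\<in>{0<..<b}.
      \<bar>(of_int z0)^a / (real a)^u * ((of_int z1)^b / (real b)^1) * ((of_int z2)^c / (real c)^1)\<bar>)"
    unfolding EZ_def real_norm_def
    by (rule order.trans[OF sum_abs sum_mono]) (rule sum_abs)
  also have "\<dots> \<le> M3 a"
    unfolding M3_def
  proof (intro sum_mono)
    fix b c assume b: "b \<in> {0<..<a}" and c: "c \<in> {0<..<b}"
    have "\<bar>(of_int z0)^a / (real a)^u * ((of_int z1)^b / (real b)^1) * ((of_int z2)^c / (real c)^1)\<bar>
        = 1 / ((real a)^u * real b * real c)"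
      using assms by (simp add: abs_mult abs_divide abs_int_pow)
    also have "\<dots> \<le> 1 / ((real a)^2 * real b * real c)"
      using b c pow_ge[OF assms(1), of a]
      by (intro divide_left_mono mult_right_mono mult_pos_pos) auto
    finally show "\<bar>(of_int z0)^a / (real a)^u * ((of_int z1)^b / (real b)^1) * ((of_int z2)^c / (real c)^1)\<bar>
        \<le> 1 / ((real a)^2 * real b * real c)" .
  qed
  finally show ?thesis .
qed

lemma EZ_summable:
  assumes "u \<ge> 2" "\<bar>z0\<bar> = 1" "\<bar>z1\<bar> = 1" "\<bar>z2\<bar> = 1"
  shows "summable (EZ u 1 1 z0 z1 z2)"
  by (rule summable_comparison_test'[OF M3_summable, of 0]) (use EZ_bound[OF assms] in auto)

lemma MT_bound:
  assumes "k \<ge> 2" "l \<ge> 1"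
  shows "norm (MT k l a) \<le> 8 * M3 a"
proof -
  have "norm (MT k l a) \<le> (\<Sum>b\<in>{0<..<a}. \<Sum>c\<in>{0<..<b}.
      \<bar>(if odd a \<and> even b \<and> odd c then 8 / ((real a)^k * (real b)^l * real c) else 0)\<bar>)"
    unfolding MT_def real_norm_def
    by (rule order.trans[OF sum_abs sum_mono]) (rule sum_abs)
  also have "\<dots> \<le> (\<Sum>b\<in>{0<..<a}. \<Sum>c\<in>{0<..<b}. 8 * (1 / ((real a)^2 * real b * real c)))"
  proof (intro sum_mono)
    fix b c assume b: "b \<in> {0<..<a}" and c: "c \<in> {0<..<b}"
    have "8 / ((real a)^k * (real b)^l * real c) \<le> 8 / ((real a)^2 * real b * real c)"
      using b c pow_ge[OF assms(1), of a] pow_ge1[OF assms(2), of b]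
      by (intro divide_left_mono mult_mono mult_pos_pos) auto
    then show "\<bar>(if odd a \<and> even b \<and> odd c then 8 / ((real a)^k * (real b)^l * real c) else 0)\<bar>
        \<le> 8 * (1 / ((real a)^2 * real b * real c))" by auto
  qed
  also have "\<dots> = 8 * M3 a" unfolding M3_def by (simp add: sum_distrib_left)
  finally show ?thesis .
qed

lemma MT_summable:
  assumes "k \<ge> 2" "l \<ge> 1"
  shows "summable (MT k l)"
  by (rule summable_comparison_test'[OF summable_mult[OF M3_summable, of 8], of 0])
     (use MT_bound[OF assms] in auto)

lemma MT2_bound:
  assumes "k \<ge> 2"
  shows "norm (MT2 k a) \<le> 4 * M2 a"
proof -
  have "norm (MT2 k a) \<le> (\<Sum>b\<in>{0<..<a}.
      \<bar>(if even a \<and> odd b then 4 / ((real a)^k * (real b)^2) else 0)\<bar>)"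
    unfolding MT2_def real_norm_def by (rule sum_abs)
  also have "\<dots> \<le> (\<Sum>b\<in>{0<..<a}. 4 * (1 / ((real a)^2 * (real b)^2)))"
  proof (intro sum_mono)
    fix b assume b: "b \<in> {0<..<a}"
    have "4 / ((real a)^k * (real b)^2) \<le> 4 / ((real a)^2 * (real b)^2)"
      using b pow_ge[OF assms(1), of a]
      by (intro divide_left_mono mult_mono mult_pos_pos) auto
    then show "\<bar>(if even a \<and> odd b then 4 / ((real a)^k * (real b)^2) else 0)\<bar>
        \<le> 4 * (1 / ((real a)^2 * (real b)^2))" by auto
  qed
  also have "\<dots> = 4 * M2 a" unfolding M2_def by (simp add: sum_distrib_left)
  finally show ?thesis .
qed

lemma MT2_summable:
  assumes "k \<ge> 2"
  shows "summable (MT2 k)"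
  by (rule summable_comparison_test'[OF summable_mult[OF M2_summable, of 4], of 0])
     (use MT2_bound[OF assms] in auto)



lemma interchange:
  fixes h :: "nat \<Rightarrow> nat \<Rightarrow> real"
  assumes nonneg: "\<And>a b. h a b \<ge> 0"
    and zero: "\<And>a b. a \<le> b \<Longrightarrow> h a b = 0"
    and rows: "\<And>b. (\<lambda>a. h a b) sums G b"
    and sG: "summable G"
  shows "(\<lambda>a. \<Sum>b<a. h a b) sums suminf G"
proof -
  have Gnn: "G b \<ge> 0" for b
    by (rule sums_le[OF _ sums_zero rows]) (simp add: nonneg)
  have part: "(\<Sum>a<N. \<Sum>b<a. h a b) \<le> suminf G" for N
  proof -
    have "(\<Sum>a<N. \<Sum>b<a. h a b) = (\<Sum>a<N. \<Sum>b<N. h a b)"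
    proof (rule sum.cong[OF refl])
      fix a assume "a \<in> {..<N}"
      then show "(\<Sum>b<a. h a b) = (\<Sum>b<N. h a b)"
        by (intro sum.mono_neutral_left) (auto simp: zero)
    qed
    also have "\<dots> = (\<Sum>b<N. \<Sum>a<N. h a b)" by (rule sum.swap)
    also have "\<dots> \<le> (\<Sum>b<N. G b)"
    proof (rule sum_mono)
      fix b
      have s1: "summable (\<lambda>a. h a b)" using rows[of b] by (rule sums_summable)
      have s2: "suminf (\<lambda>a. h a b) = G b" using rows[of b] by (rule sums_unique[symmetric])
      show "(\<Sum>a<N. h a b) \<le> G b"
        using sum_le_suminf[OF s1, of "{..<N}"] nonneg s2 by simp
    qed
    also have "\<dots> \<le> suminf G" using sG Gnn by (intro sum_le_suminf) auto
    finally show ?thesis .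
  qed
  have Ynn: "(\<Sum>b<a. h a b) \<ge> 0" for a using nonneg by (intro sum_nonneg) auto
  have sY: "summable (\<lambda>a. \<Sum>b<a. h a b)"
    by (rule summableI_nonneg_bounded[where x = "suminf G"]) (use Ynn part in auto)
  have le1: "suminf (\<lambda>a. \<Sum>b<a. h a b) \<le> suminf G"
    by (rule suminf_le_const[OF sY part])
  have partG: "(\<Sum>b<M. G b) \<le> suminf (\<lambda>a. \<Sum>b<a. h a b)" for M
  proof -
    have "(\<Sum>b<M. G b) = (\<Sum>b<M. suminf (\<lambda>a. h a b))"
      by (rule sum.cong[OF refl]) (rule sums_unique[OF rows])
    also have "\<dots> = suminf (\<lambda>a. \<Sum>b<M. h a b)"
      using rows by (intro suminf_sum[symmetric]) (auto intro: sums_summable)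
    also have "\<dots> \<le> suminf (\<lambda>a. \<Sum>b<a. h a b)"
    proof (rule suminf_le)
      fix a
      have "(\<Sum>b<M. h a b) = (\<Sum>b<min M a. h a b)"
        by (intro sum.mono_neutral_right) (auto simp: zero)
      also have "\<dots> \<le> (\<Sum>b<a. h a b)"
        by (intro sum_mono2) (auto simp: nonneg)
      finally show "(\<Sum>b<M. h a b) \<le> (\<Sum>b<a. h a b)" .
    next
      show "summable (\<lambda>a. \<Sum>b<M. h a b)"
        using rows by (intro summable_sum) (auto intro: sums_summable)
    qed (rule sY)
    finally show ?thesis .
  qed
  have le2: "suminf G \<le> suminf (\<lambda>a. \<Sum>b<a. h a b)"
    by (rule suminf_le_const[OF sG partG])
  show ?thesis using sY le1 le2 using summable_sums[OF sY] antisym[OF le1 le2] by simp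
qed

lemma shift_telescope:
  fixes \<phi> :: "nat \<Rightarrow> real"
  assumes "\<phi> \<longlonglongrightarrow> 0"
  shows "(\<lambda>j. \<phi> j - \<phi> (j + p)) sums (\<Sum>j<p. \<phi> j)"
proof (induction p)
  case 0 then show ?case by simp
next
  case (Suc p)
  have "(\<lambda>j. \<phi> (j + p)) \<longlonglongrightarrow> 0"
    using LIMSEQ_ignore_initial_segment[OF assms, of p] by simp
  then have "(\<lambda>j. \<phi> (j + p) - \<phi> (Suc (j + p))) sums (\<phi> (0 + p) - 0)"
    using telescope_sums'[of "\<lambda>j. \<phi> (j + p)" 0] by simp
  from sums_add[OF Suc.IH this] show ?case by (simp add: algebra_simps)
qed

definition Ho :: "nat \<Rightarrow> real" where
  "Ho b = (\<Sum>c\<in>{0<..<b}. if odd c then 1 / real c else 0)"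

lemma Ho_Suc: "Ho (Suc n) = Ho n + (if odd n then 1 / real n else 0)"
proof (cases "n = 0")
  case True then show ?thesis by (simp add: Ho_def)
next
  case False
  then have "{0<..<Suc n} = insert n {0<..<n}" by auto
  then show ?thesis unfolding Ho_def by simp
qed

lemma Ho_even: "Ho (2 * p) = (\<Sum>j<p. 1 / (2 * real j + 1))"
proof (induction p)
  case 0 then show ?case by (simp add: Ho_def)
next
  case (Suc p)
  have "Ho (2 * Suc p) = Ho (Suc (Suc (2 * p)))" by simp
  also have "\<dots> = Ho (2 * p) + 1 / (2 * real p + 1)"
    by (simp add: Ho_Suc)
  finally show ?case using Suc.IH by simp
qed

lemma Ho_nonneg: "Ho b \<ge> 0" unfolding Ho_def by (intro sum_nonneg) auto

lemma tele_row:
  assumes "even b" "b > 0"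
  shows "(\<lambda>a. if odd a \<and> b < a then 1 / (real a * (real a - real b)) else 0) sums (Ho b / real b)"
proof -
  obtain p where b: "b = 2 * p" using assms by blast
  with assms have p: "p > 0" by simp
  define g where "g j = 2 * (j + p) + 1" for j
  define f where "f a = (if odd a \<and> b < a then 1 / (real a * (real a - real b)) else 0)" for a
  have sm: "strict_mono g" unfolding g_def by (intro strict_monoI) auto
  have z: "f a = 0" if "a \<notin> range g" for a
  proof (rule ccontr)
    assume "f a \<noteq> 0"
    then have "odd a" "b < a" unfolding f_def by (auto split: if_splits)
    then obtain m where "a = 2 * m + 1" by (metis oddE)
    with \<open>b < a\<close> b have "a = g (m - p)" unfolding g_def by auto
    with that show False by auto
  qed
  define \<phi> where "\<phi> j = 1 / (2 * real j + 1)" for j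
  have phi0: "\<phi> \<longlonglongrightarrow> 0"
  proof (rule tendsto_sandwich[of "\<lambda>_. 0" _ _ "\<lambda>j. inverse (real (Suc j))"])
    show "\<forall>\<^sub>F n in sequentially. 0 \<le> \<phi> n" unfolding \<phi>_def by simp
    show "\<forall>\<^sub>F n in sequentially. \<phi> n \<le> inverse (real (Suc n))"
      unfolding \<phi>_def by (intro always_eventually allI) (simp add: field_simps)
    show "(\<lambda>j. inverse (real (Suc j))) \<longlonglongrightarrow> 0" by (rule LIMSEQ_inverse_real_of_nat)
  qed auto
  have fg: "f (g j) = (1 / real b) * (\<phi> j - \<phi> (j + p))" for j
    unfolding f_def g_def \<phi>_def b using p
    by (simp add: field_simps)
  have "(\<lambda>j. (1 / real b) * (\<phi> j - \<phi> (j + p))) sums ((1 / real b) * (\<Sum>j<p. \<phi> j))"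
    by (intro sums_mult shift_telescope phi0)
  then have "(\<lambda>j. f (g j)) sums (Ho b / real b)"
    unfolding fg b Ho_even \<phi>_def by simp
  then have "f sums (Ho b / real b)" using sums_mono_reindex[of g f "Ho b / real b", OF sm z] by blast
  then show ?thesis unfolding f_def .
qed



lemma geom_alg:
  fixes x y X Y :: real
  assumes "X > 0" "Y > 0" "y > 0" "x - y > 0" "x > 0"
  shows "1/(x*X*y) + (1/(Y*x*(x-y)) - 1/(X*(x-y)))/y + 1/(x*X*(x-y)) = 1/(Y*y*x*(x-y))"
proof -
  have d: "x * X * y * (x - y) \<noteq> 0" using assms by auto
  have "1/(x*X*y) - 1/(X*(x-y)*y) + 1/(x*X*(x-y)) = ((x - y) - x + y) / (x*X*y*(x-y))"
    using assms by (simp add: divide_simps)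
  also have "\<dots> = 0" by simp
  finally have z: "1/(x*X*y) - 1/(X*(x-y)*y) + 1/(x*X*(x-y)) = 0" .
  have "(1/(Y*x*(x-y)) - 1/(X*(x-y)))/y = 1/(Y*y*x*(x-y)) - 1/(X*(x-y)*y)"
    by (simp add: diff_divide_distrib mult_ac)
  then show ?thesis using z by simp
qed

lemma geom_id:
  fixes x y :: real
  assumes "0 < y" "y < x" "2 \<le> u"
  shows "(\<Sum>k\<in>{2..u}. 1 / (x^k * y^(u+1-k))) + 1 / (x^u * (x - y)) = 1 / (y^(u-1) * x * (x - y))"
  using assms(3)
proof (induction u rule: nat_induct_at_least)
  case base
  have "x - y > 0" using assms by simp
  then show ?case using assms by (simp add: field_simps power2_eq_square)
next
  case (Suc n)
  have xy: "x - y > 0" "x > 0" using assms by auto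
  have "{2..Suc n} = insert (Suc n) {2..n}" using Suc.hyps by auto
  then have "(\<Sum>k\<in>{2..Suc n}. 1 / (x^k * y^(Suc n+1-k)))
      = 1 / (x^(Suc n) * y) + (\<Sum>k\<in>{2..n}. 1 / (x^k * y^(Suc n+1-k)))" by simp
  also have "(\<Sum>k\<in>{2..n}. 1 / (x^k * y^(Suc n+1-k))) = (\<Sum>k\<in>{2..n}. 1 / (x^k * y^(n+1-k))) / y"
    unfolding sum_divide_distrib
  proof (rule sum.cong[OF refl])
    fix k assume "k \<in> {2..n}"
    then have "Suc n + 1 - k = Suc (n + 1 - k)" by auto
    then show "1 / (x^k * y^(Suc n+1-k)) = 1 / (x^k * y^(n+1-k)) / y" by simp
  qed
  also have "(\<Sum>k\<in>{2..n}. 1 / (x^k * y^(n+1-k))) = 1 / (y^(n-1) * x * (x - y)) - 1 / (x^n * (x - y))"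
    using Suc.IH by simp
  finally have S: "(\<Sum>k\<in>{2..Suc n}. 1 / (x^k * y^(Suc n+1-k)))
     = 1 / (x^(Suc n) * y) + (1 / (y^(n-1) * x * (x - y)) - 1 / (x^n * (x - y))) / y" .
  have yn: "y^(Suc n - 1) = y^(n-1) * y" using Suc.hyps
    by (metis Suc_diff_le diff_Suc_1 le_trans one_le_numeral power_Suc2)
  have "1 / (x^(Suc n) * y) + (1 / (y^(n-1) * x * (x - y)) - 1 / (x^n * (x - y))) / y
     + 1 / (x ^ Suc n * (x - y)) = 1 / (y^(n-1) * y * x * (x - y))"
    using geom_alg[of "x^n" "y^(n-1)" y x] xy assms(1) by (simp add: mult_ac)
  then show ?case unfolding S yn .
qed

lemma square_id:
  fixes x :: "nat \<Rightarrow> real"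
  shows "(\<Sum>c\<in>{0<..<n}. x c)^2 = (\<Sum>c\<in>{0<..<n}. (x c)^2) + 2 * (\<Sum>c\<in>{0<..<n}. \<Sum>d\<in>{0<..<c}. x c * x d)"
proof (induction n)
  case 0 then show ?case by simp
next
  case (Suc n)
  show ?case
  proof (cases "n = 0")
    case True
    have "{0<..<Suc 0} = ({}::nat set)" by auto
    with True show ?thesis by simp
  next
    case False
    then have I: "{0<..<Suc n} = insert n {0<..<n}" by auto
    have "(\<Sum>d\<in>{0<..<n}. x n * x d) = x n * (\<Sum>d\<in>{0<..<n}. x d)" by (simp add: sum_distrib_left)
    then show ?thesis unfolding I using Suc.IH by (simp add: power2_eq_square algebra_simps)
  qed
qed

lemma reflect_odd:
  assumes "even (b::nat)"
  shows "(\<Sum>c\<in>{0<..<b}. if odd c then 1 / (real b - real c) else 0) = (\<Sum>c\<in>{0<..<b}. if odd c then 1 / real c else 0)"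
proof -
  have par: "odd (b - c) \<longleftrightarrow> odd c" if "c < b" for c using that assms by presburger
  show ?thesis
    by (rule sum.reindex_bij_witness[of _ "\<lambda>c. b - c" "\<lambda>c. b - c"]) (use assms in \<open>auto simp: of_nat_diff par\<close>)
qed

lemma inner_Q:
  assumes "even (b::nat)"
  shows "(\<Sum>c\<in>{0<..<b}. if odd c then 1 / (real c * (real b - real c)) else 0)
       = (\<Sum>c\<in>{0<..<b}. if odd c then 2 / (real b * real c) else 0)"
proof -
  have "(\<Sum>c\<in>{0<..<b}. if odd c then 1 / (real c * (real b - real c)) else 0)
      = (\<Sum>c\<in>{0<..<b}. (if odd c then 1 / real c else 0) / real b + (if odd c then 1 / (real b - real c) else 0) / real b)"
  proof (rule sum.cong[OF refl])
    fix c assume "c \<in> {0<..<b}"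
    then have "real c > 0" "real b - real c > 0" by auto
    then show "(if odd c then 1 / (real c * (real b - real c)) else 0)
      = (if odd c then 1 / real c else 0) / real b + (if odd c then 1 / (real b - real c) else 0) / real b"
      by (simp add: field_simps)
  qed
  also have "\<dots> = (\<Sum>c\<in>{0<..<b}. if odd c then 1 / real c else 0) / real b * 2"
    by (simp add: sum.distrib reflect_odd[OF assms] flip: sum_divide_distrib)
  also have "\<dots> = (\<Sum>c\<in>{0<..<b}. if odd c then 1 / real c else 0) * (2 / real b)" by simp
  also have "\<dots> = (\<Sum>c\<in>{0<..<b}. (if odd c then 1 / real c else 0) * (2 / real b))"
    by (rule sum_distrib_right)
  also have "\<dots> = (\<Sum>c\<in>{0<..<b}. if odd c then 2 / (real b * real c) else 0)"
    by (rule sum.cong) auto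
  finally show ?thesis .
qed

lemma pair_sum: "(\<Sum>b\<in>{0<..<a}. \<Sum>c\<in>{0<..<b}. f b c) = (\<Sum>(b,c)\<in>{(b,c). 0 < c \<and> c < b \<and> b < (a::nat)}. f b c)"
proof -
  have "Sigma {0<..<a} (\<lambda>b. {0<..<b}) = {(b,c). 0 < c \<and> c < b \<and> b < a}" by auto
  then show ?thesis by (subst sum.Sigma) auto
qed

lemma X_swap:
  assumes "odd (a::nat)"
  shows "(\<Sum>b\<in>{0<..<a}. \<Sum>c\<in>{0<..<b}. if even b \<and> odd c then 1 / ((real a - real b) * real c) else 0)
       = (\<Sum>b\<in>{0<..<a}. \<Sum>c\<in>{0<..<b}. if even b \<and> odd c then 1 / (real c * (real b - real c)) else 0)"
proof -
  have par: "(even (a - b + c) \<and> odd c) \<longleftrightarrow> (even b \<and> odd c)" if "c < b" "b < a" for b c using that assms by presburger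
  show ?thesis
    unfolding pair_sum
    apply (rule sum.reindex_bij_witness[of _ "\<lambda>(b,c). (a - b + c, c)" "\<lambda>(b,c). (a - b + c, c)"])
    apply (use assms in \<open>auto simp: of_nat_diff par mult.commute\<close>)
    done
qed



definition Pf :: "nat \<Rightarrow> nat \<Rightarrow> real" where
  "Pf u a = (\<Sum>b\<in>{0<..<a}. \<Sum>c\<in>{0<..<b}. if odd a \<and> even b \<and> odd c
      then (\<Sum>k\<in>{2..u}. 1 / ((real a)^k * (real b)^(u+1-k))) / real c else 0)"
definition Xf :: "nat \<Rightarrow> nat \<Rightarrow> real" where
  "Xf u a = (\<Sum>b\<in>{0<..<a}. \<Sum>c\<in>{0<..<b}. if odd a \<and> even b \<and> odd c
      then 1 / ((real a)^u * (real a - real b) * real c) else 0)"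
definition Yf :: "nat \<Rightarrow> nat \<Rightarrow> real" where
  "Yf u a = (\<Sum>b\<in>{0<..<a}. \<Sum>c\<in>{0<..<b}. if odd a \<and> even b \<and> odd c
      then 1 / ((real b)^(u-1) * real a * (real a - real b) * real c) else 0)"
definition Df :: "nat \<Rightarrow> nat \<Rightarrow> real" where
  "Df u a = (\<Sum>b\<in>{0<..<a}. \<Sum>c\<in>{0<..<b}. if odd a \<and> even b \<and> odd c
      then 1 / ((real a)^u * real b * real c) else 0)"
definition Cf :: "nat \<Rightarrow> nat \<Rightarrow> real" where
  "Cf u a = (\<Sum>b\<in>{0<..<a}. \<Sum>c\<in>{0<..<b}. if even a \<and> odd b \<and> odd c
      then 1 / ((real a)^u * real b * real c) else 0)"
definition Bf :: "nat \<Rightarrow> nat \<Rightarrow> real" where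
  "Bf u a = (\<Sum>b\<in>{0<..<a}. if even a \<and> odd b then 1 / ((real a)^u * (real b)^2) else 0)"

lemma PXY:
  assumes "u \<ge> 2"
  shows "Pf u a + Xf u a = Yf u a"
proof -
  have "Pf u a + Xf u a = (\<Sum>b\<in>{0<..<a}. \<Sum>c\<in>{0<..<b}.
     (if odd a \<and> even b \<and> odd c
      then (\<Sum>k\<in>{2..u}. 1 / ((real a)^k * (real b)^(u+1-k))) / real c else 0) +
     (if odd a \<and> even b \<and> odd c
      then 1 / ((real a)^u * (real a - real b) * real c) else 0))"
    unfolding Pf_def Xf_def by (simp add: sum.distrib)
  also have "\<dots> = Yf u a" unfolding Yf_def
  proof (intro sum.cong refl)
    fix b c assume b: "b \<in> {0<..<a}" and c: "c \<in> {0<..<b}"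
    have g: "(\<Sum>k\<in>{2..u}. 1 / ((real a)^k * (real b)^(u+1-k))) + 1 / ((real a)^u * (real a - real b))
        = 1 / ((real b)^(u-1) * real a * (real a - real b))"
      using b assms by (intro geom_id) auto
    have "(\<Sum>k\<in>{2..u}. 1 / ((real a)^k * (real b)^(u+1-k))) / real c + 1 / ((real a)^u * (real a - real b) * real c)
       = ((\<Sum>k\<in>{2..u}. 1 / ((real a)^k * (real b)^(u+1-k))) + 1 / ((real a)^u * (real a - real b))) / real c"
      by (simp add: add_divide_distrib)
    also have "\<dots> = 1 / ((real b)^(u-1) * real a * (real a - real b) * real c)"
      unfolding g by simp
    finally show "(if odd a \<and> even b \<and> odd c
      then (\<Sum>k\<in>{2..u}. 1 / ((real a)^k * (real b)^(u+1-k))) / real c else 0) +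
     (if odd a \<and> even b \<and> odd c
      then 1 / ((real a)^u * (real a - real b) * real c) else 0) =
      (if odd a \<and> even b \<and> odd c
      then 1 / ((real b)^(u-1) * real a * (real a - real b) * real c) else 0)" by simp
  qed
  finally show ?thesis .
qed

lemma XD: "Xf u a = 2 * Df u a"
proof (cases "odd a")
  case False
  then show ?thesis unfolding Xf_def Df_def by simp
next
  case True
  have "Xf u a = 1 / (real a)^u * (\<Sum>b\<in>{0<..<a}. \<Sum>c\<in>{0<..<b}. if even b \<and> odd c then 1 / ((real a - real b) * real c) else 0)"
    unfolding Xf_def sum_distrib_left using True by (intro sum.cong refl) auto
  also have "(\<Sum>b\<in>{0<..<a}. \<Sum>c\<in>{0<..<b}. if even b \<and> odd c then 1 / ((real a - real b) * real c) else 0)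
     = (\<Sum>b\<in>{0<..<a}. \<Sum>c\<in>{0<..<b}. if even b \<and> odd c then 1 / (real c * (real b - real c)) else 0)"
    by (rule X_swap[OF True])
  also have "\<dots> = (\<Sum>b\<in>{0<..<a}. \<Sum>c\<in>{0<..<b}. if even b \<and> odd c then 2 / (real b * real c) else 0)"
  proof (rule sum.cong[OF refl])
    fix b
    show "(\<Sum>c\<in>{0<..<b}. if even b \<and> odd c then 1 / (real c * (real b - real c)) else 0)
        = (\<Sum>c\<in>{0<..<b}. if even b \<and> odd c then 2 / (real b * real c) else 0)"
    proof (cases "even b")
      case True then show ?thesis using inner_Q[OF True] by simp
    qed simp
  qed
  also have "1 / (real a)^u * (\<Sum>b\<in>{0<..<a}. \<Sum>c\<in>{0<..<b}. if even b \<and> odd c then 2 / (real b * real c) else 0)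
      = 2 * Df u a"
    unfolding Df_def sum_distrib_left using True by (intro sum.cong refl) auto
  finally show ?thesis .
qed

definition hh :: "nat \<Rightarrow> nat \<Rightarrow> nat \<Rightarrow> real" where
  "hh u a b = (if odd a \<and> even b \<and> 0 < b \<and> b < a then Ho b / ((real b)^(u-1) * real a * (real a - real b)) else 0)"

lemma Y_hh: "Yf u a = (\<Sum>b<a. hh u a b)"
proof -
  have "Yf u a = (\<Sum>b\<in>{0<..<a}. hh u a b)"
    unfolding Yf_def
  proof (rule sum.cong[OF refl])
    fix b assume b: "b \<in> {0<..<a}"
    show "(\<Sum>c\<in>{0<..<b}. if odd a \<and> even b \<and> odd c
      then 1 / ((real b)^(u-1) * real a * (real a - real b) * real c) else 0) = hh u a b"
    proof (cases "odd a \<and> even b")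
      case True
      have "(\<Sum>c\<in>{0<..<b}. if odd a \<and> even b \<and> odd c
          then 1 / ((real b)^(u-1) * real a * (real a - real b) * real c) else 0)
         = 1 / ((real b)^(u-1) * real a * (real a - real b)) * Ho b"
        unfolding Ho_def sum_distrib_left using True by (intro sum.cong refl) auto
      then show ?thesis unfolding hh_def using True b by simp
    next
      case False then show ?thesis unfolding hh_def by auto
    qed
  qed
  also have "\<dots> = (\<Sum>b<a. hh u a b)"
    by (rule sum_pos_lessThan) (simp add: hh_def)
  finally show ?thesis .
qed

definition GG :: "nat \<Rightarrow> nat \<Rightarrow> real" where
  "GG u b = (if even b \<and> 0 < b then (Ho b)^2 / (real b)^u else 0)"

lemma hh_rows:
  assumes "u \<ge> 2"
  shows "(\<lambda>a. hh u a b) sums GG u b"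
proof (cases "even b \<and> 0 < b")
  case True
  have "(\<lambda>a. (Ho b / (real b)^(u-1)) * (if odd a \<and> b < a then 1 / (real a * (real a - real b)) else 0))
     sums ((Ho b / (real b)^(u-1)) * (Ho b / real b))"
    using True by (intro sums_mult tele_row) auto
  moreover have "(\<lambda>a. (Ho b / (real b)^(u-1)) * (if odd a \<and> b < a then 1 / (real a * (real a - real b)) else 0))
     = (\<lambda>a. hh u a b)"
    unfolding hh_def using True by (auto simp: fun_eq_iff)
  moreover have "(Ho b / (real b)^(u-1)) * (Ho b / real b) = GG u b"
  proof -
    have "(real b)^(u-1) * real b = (real b)^u" using assms
      by (metis One_nat_def Suc_diff_le le_trans one_le_numeral power_Suc2 diff_Suc_1)
    then show ?thesis unfolding GG_def using True by (simp add: power2_eq_square)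
  qed
  ultimately show ?thesis by simp
next
  case False
  then have "(\<lambda>a. hh u a b) = (\<lambda>_. 0)" unfolding hh_def by (auto simp: fun_eq_iff)
  moreover have "GG u b = 0" unfolding GG_def using False by auto
  ultimately show ?thesis by simp
qed

lemma GG_BC: "GG u b = Bf u b + 2 * Cf u b"
proof (cases "even b \<and> 0 < b")
  case True
  define x where "x c = (if odd c then 1 / real c else 0)" for c
  have H: "Ho b = (\<Sum>c\<in>{0<..<b}. x c)" unfolding Ho_def x_def ..
  have B: "Bf u b = 1 / (real b)^u * (\<Sum>c\<in>{0<..<b}. (x c)^2)"
    unfolding Bf_def sum_distrib_left x_def using True by (intro sum.cong refl) (auto simp: power2_eq_square)
  have C: "Cf u b = 1 / (real b)^u * (\<Sum>c\<in>{0<..<b}. \<Sum>d\<in>{0<..<c}. x c * x d)"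
    unfolding Cf_def sum_distrib_left x_def using True by (intro sum.cong refl) auto
  show ?thesis unfolding GG_def H B C square_id using True by (simp add: field_simps)
next
  case False
  then consider "b = 0" | "odd b" by auto
  then show ?thesis
  proof cases
    case 1 then show ?thesis by (simp add: GG_def Bf_def Cf_def)
  next
    case 2 then show ?thesis by (simp add: GG_def Bf_def Cf_def)
  qed
qed

lemma Df_bound:
  assumes "u \<ge> 2" shows "norm (Df u a) \<le> M3 a"
proof -
  have "norm (Df u a) = Df u a" unfolding Df_def real_norm_def
    by (intro abs_of_nonneg sum_nonneg) auto
  also have "\<dots> \<le> M3 a" unfolding Df_def M3_def
  proof (intro sum_mono)
    fix b c assume b: "b \<in> {0<..<a}" and c: "c \<in> {0<..<b}"
    have "1 / ((real a)^u * real b * real c) \<le> 1 / ((real a)^2 * real b * real c)"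
      using b c pow_ge[OF assms(1), of a]
      by (intro divide_left_mono mult_right_mono mult_pos_pos) auto
    then show "(if odd a \<and> even b \<and> odd c then 1 / ((real a)^u * real b * real c) else 0)
       \<le> 1 / ((real a)^2 * real b * real c)" using b c by auto
  qed
  finally show ?thesis .
qed

lemma Cf_bound:
  assumes "u \<ge> 2" shows "norm (Cf u a) \<le> M3 a"
proof -
  have "norm (Cf u a) = Cf u a" unfolding Cf_def real_norm_def
    by (intro abs_of_nonneg sum_nonneg) auto
  also have "\<dots> \<le> M3 a" unfolding Cf_def M3_def
  proof (intro sum_mono)
    fix b c assume b: "b \<in> {0<..<a}" and c: "c \<in> {0<..<b}"
    have "1 / ((real a)^u * real b * real c) \<le> 1 / ((real a)^2 * real b * real c)"
      using b c pow_ge[OF assms(1), of a]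
      by (intro divide_left_mono mult_right_mono mult_pos_pos) auto
    then show "(if even a \<and> odd b \<and> odd c then 1 / ((real a)^u * real b * real c) else 0)
       \<le> 1 / ((real a)^2 * real b * real c)" using b c by auto
  qed
  finally show ?thesis .
qed

lemma Bf_bound:
  assumes "u \<ge> 2" shows "norm (Bf u a) \<le> M2 a"
proof -
  have "norm (Bf u a) = Bf u a" unfolding Bf_def real_norm_def
    by (intro abs_of_nonneg sum_nonneg) auto
  also have "\<dots> \<le> M2 a" unfolding Bf_def M2_def
  proof (intro sum_mono)
    fix b assume b: "b \<in> {0<..<a}"
    have "1 / ((real a)^u * (real b)^2) \<le> 1 / ((real a)^2 * (real b)^2)"
      using b pow_ge[OF assms(1), of a]
      by (intro divide_left_mono mult_right_mono mult_pos_pos) auto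
    then show "(if even a \<and> odd b then 1 / ((real a)^u * (real b)^2) else 0)
       \<le> 1 / ((real a)^2 * (real b)^2)" using b by auto
  qed
  finally show ?thesis .
qed

lemma Df_summable: "u \<ge> 2 \<Longrightarrow> summable (Df u)"
  by (rule summable_comparison_test'[OF M3_summable, of 0]) (use Df_bound in auto)
lemma Cf_summable: "u \<ge> 2 \<Longrightarrow> summable (Cf u)"
  by (rule summable_comparison_test'[OF M3_summable, of 0]) (use Cf_bound in auto)
lemma Bf_summable: "u \<ge> 2 \<Longrightarrow> summable (Bf u)"
  by (rule summable_comparison_test'[OF M2_summable, of 0]) (use Bf_bound in auto)

lemma core:
  assumes "u \<ge> 2" "summable (Pf u)"
  shows "suminf (Pf u) = suminf (Bf u) + 2 * suminf (Cf u) - 2 * suminf (Df u)"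
proof -
  have sD: "summable (Df u)" using Df_summable[OF assms(1)] .
  have sX: "summable (Xf u)" unfolding XD[abs_def] using summable_mult[OF sD, of 2] by simp
  have sXv: "suminf (Xf u) = 2 * suminf (Df u)" unfolding XD[abs_def] using suminf_mult[OF sD, of 2] by simp
  have YPX: "Yf u = (\<lambda>a. Pf u a + Xf u a)" using PXY[OF assms(1)] by (simp add: fun_eq_iff)
  have sY: "suminf (Yf u) = suminf (Pf u) + suminf (Xf u)"
    unfolding YPX by (rule suminf_add[OF assms(2) sX, symmetric])
  have sG: "summable (GG u)" unfolding GG_BC[abs_def]
    by (intro summable_add summable_mult Bf_summable Cf_summable assms(1))
  have GGv: "suminf (GG u) = suminf (Bf u) + 2 * suminf (Cf u)"
    unfolding GG_BC[abs_def]
    using suminf_add[OF Bf_summable[OF assms(1)] summable_mult[OF Cf_summable[OF assms(1)], of 2]]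
          suminf_mult[OF Cf_summable[OF assms(1)], of 2] by simp
  have "(\<lambda>a. \<Sum>b<a. hh u a b) sums suminf (GG u)"
  proof (rule interchange)
    show "hh u a b \<ge> 0" for a b unfolding hh_def using Ho_nonneg[of b] by auto
    show "a \<le> b \<Longrightarrow> hh u a b = 0" for a b unfolding hh_def by auto
    show "(\<lambda>a. hh u a b) sums GG u b" for b by (rule hh_rows[OF assms(1)])
  qed (rule sG)
  then have "Yf u sums suminf (GG u)" unfolding Y_hh[abs_def] .
  then have "suminf (Yf u) = suminf (GG u)" by (rule sums_unique[symmetric])
  then show ?thesis using sY sXv GGv by simp
qed



lemma R1: "(\<Sum>k\<in>{2..u}. MT k (u+1-k) a) = 8 * Pf u a"
proof -
  have "(\<Sum>k\<in>{2..u}. MT k (u+1-k) a) = (\<Sum>b\<in>{0<..<a}. \<Sum>c\<in>{0<..<b}. \<Sum>k\<in>{2..u}.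
      (if odd a \<and> even b \<and> odd c then 8 / ((real a)^k * (real b)^(u+1-k) * real c) else 0))"
    unfolding MT_def by (simp add: sum.swap[of _ "{2..u}"])
  also have "\<dots> = 8 * Pf u a" unfolding Pf_def sum_distrib_left
  proof (intro sum.cong refl)
    fix b c
    show "(\<Sum>k\<in>{2..u}. (if odd a \<and> even b \<and> odd c then 8 / ((real a)^k * (real b)^(u+1-k) * real c) else 0))
      = 8 * (if odd a \<and> even b \<and> odd c then (\<Sum>k\<in>{2..u}. 1 / ((real a)^k * (real b)^(u+1-k))) / real c else 0)"
    proof (cases "odd a \<and> even b \<and> odd c")
      case True then show ?thesis by (simp add: sum_divide_distrib sum_distrib_left)
    next
      case False then show ?thesis by (subst sum.neutral) auto
    qed
  qed
  finally show ?thesis .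
qed

lemma R2_term:
  fixes a b c u :: nat
  shows "(of_int 1)^a / (real a)^u * ((of_int (-1))^b / (real b)^1) * ((of_int (-1))^c / (real c)^1)
       + (of_int (-1))^a / (real a)^u * ((of_int 1)^b / (real b)^1) * ((of_int 1)^c / (real c)^1)
       - (of_int (-1))^a / (real a)^u * ((of_int 1)^b / (real b)^1) * ((of_int (-1))^c / (real c)^1)
       - (of_int 1)^a / (real a)^u * ((of_int (-1))^b / (real b)^1) * ((of_int 1)^c / (real c)^1)
     = 4 * (if even a \<and> odd b \<and> odd c then 1 / ((real a)^u * real b * real c) else 0)
       - 4 * (if odd a \<and> even b \<and> odd c then 1 / ((real a)^u * real b * real c) else 0)"
proof -
  define q where "q = 1 / ((real a)^u * real b * real c)"
  have e: "(of_int z0)^a / (real a)^u * ((of_int z1)^b / (real b)^1) * ((of_int z2)^c / (real c)^1)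
     = (of_int z0)^a * (of_int z1)^b * (of_int z2)^c * q" for z0 z1 z2 :: int
    unfolding q_def by simp
  show ?thesis unfolding e unfolding q_def[symmetric]
    by (cases "even a"; cases "even b"; cases "even c") (simp_all add: algebra_simps)
qed

lemma R2: "EZ u 1 1 1 (-1) (-1) a + EZ u 1 1 (-1) 1 1 a - EZ u 1 1 (-1) 1 (-1) a - EZ u 1 1 1 (-1) 1 a
   = 4 * Cf u a - 4 * Df u a"
  unfolding EZ_def Cf_def Df_def
  by (simp only: sum_distrib_left sum.distrib[symmetric] sum_subtractf[symmetric] R2_term)

theorem corollary5p3:
  fixes w u :: nat
  assumes "w \<ge> 4" and "u = w - 2"
  shows "(\<Sum>a\<in>{a. \<exists>b. a + b = w - 1 \<and> a \<ge> 2 \<and> b \<ge> 1}. multT [a, w - 1 - a, 1])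
    = 2 * multT [u, 2]
      + 4 * (euler_zeta [u, 1, 1] [1, -1, -1] + euler_zeta [u, 1, 1] [-1, 1, 1]
             - euler_zeta [u, 1, 1] [-1, 1, -1] - euler_zeta [u, 1, 1] [1, -1, 1])"
proof -
  have u2: "u \<ge> 2" using assms by simp
  have S: "{a. \<exists>b. a + b = w - 1 \<and> a \<ge> 2 \<and> b \<ge> 1} = {2..u}"
    using assms apply auto
    subgoal for x by (rule exI[of _ "w - Suc 0 - x"]) auto
    done
  have sMT: "summable (MT k (u+1-k))" if "k \<in> {2..u}" for k
    using that by (intro MT_summable) auto
  have "(\<Sum>a\<in>{a. \<exists>b. a + b = w - 1 \<and> a \<ge> 2 \<and> b \<ge> 1}. multT [a, w - 1 - a, 1])
      = (\<Sum>k\<in>{2..u}. suminf (MT k (u+1-k)))"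
    unfolding S
  proof (rule sum.cong[OF refl])
    fix k assume k: "k \<in> {2..u}"
    have "w - 1 - k = u + 1 - k" using assms by simp
    then show "multT [k, w - 1 - k, 1] = suminf (MT k (u+1-k))"
      using multT_3[OF sMT[OF k]] by simp
  qed
  also have "\<dots> = suminf (\<lambda>a. \<Sum>k\<in>{2..u}. MT k (u+1-k) a)"
    by (rule suminf_sum[symmetric]) (rule sMT)
  also have "\<dots> = suminf (\<lambda>a. 8 * Pf u a)" by (simp only: R1)
  also have "\<dots> = 8 * suminf (Pf u)"
  proof -
    have "summable (\<lambda>a. \<Sum>k\<in>{2..u}. MT k (u+1-k) a)" by (intro summable_sum sMT)
    then have "summable (\<lambda>a. 8 * Pf u a)" by (simp only: R1)
    then have sP: "summable (Pf u)" using summable_mult[of "\<lambda>a. 8 * Pf u a" "1/8"] by simp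
    show ?thesis by (rule suminf_mult[OF sP])
  qed
  finally have L: "(\<Sum>a\<in>{a. \<exists>b. a + b = w - 1 \<and> a \<ge> 2 \<and> b \<ge> 1}. multT [a, w - 1 - a, 1])
      = 8 * suminf (Pf u)" .
  have sP: "summable (Pf u)"
  proof -
    have "summable (\<lambda>a. \<Sum>k\<in>{2..u}. MT k (u+1-k) a)" by (intro summable_sum sMT)
    then have "summable (\<lambda>a. 8 * Pf u a)" by (simp only: R1)
    then show ?thesis using summable_mult[of "\<lambda>a. 8 * Pf u a" "1/8"] by simp
  qed
  have MT2B: "MT2 u = (\<lambda>a. 4 * Bf u a)"
    unfolding MT2_def Bf_def by (auto simp: fun_eq_iff sum_distrib_left intro!: sum.cong)
  have T2: "multT [u, 2] = 4 * suminf (Bf u)"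
    using multT_2[OF MT2_summable[OF u2]] suminf_mult[OF Bf_summable[OF u2], of 4] MT2B by simp
  have sE1: "summable (EZ u 1 1 1 (-1) (-1))" by (rule EZ_summable[OF u2]) auto
  have sE2: "summable (EZ u 1 1 (-1) 1 1)" by (rule EZ_summable[OF u2]) auto
  have sE3: "summable (EZ u 1 1 (-1) 1 (-1))" by (rule EZ_summable[OF u2]) auto
  have sE4: "summable (EZ u 1 1 1 (-1) 1)" by (rule EZ_summable[OF u2]) auto
  have "euler_zeta [u, 1, 1] [1, -1, -1] + euler_zeta [u, 1, 1] [-1, 1, 1]
             - euler_zeta [u, 1, 1] [-1, 1, -1] - euler_zeta [u, 1, 1] [1, -1, 1]
      = suminf (EZ u 1 1 1 (-1) (-1)) + suminf (EZ u 1 1 (-1) 1 1)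
        - suminf (EZ u 1 1 (-1) 1 (-1)) - suminf (EZ u 1 1 1 (-1) 1)"
    using euler_zeta_3[OF sE1] euler_zeta_3[OF sE2] euler_zeta_3[OF sE3] euler_zeta_3[OF sE4] by simp
  also have "\<dots> = suminf (\<lambda>a. EZ u 1 1 1 (-1) (-1) a + EZ u 1 1 (-1) 1 1 a - EZ u 1 1 (-1) 1 (-1) a - EZ u 1 1 1 (-1) 1 a)"
    using suminf_add[OF sE1 sE2] suminf_diff[OF summable_add[OF sE1 sE2] sE3]
      suminf_diff[OF summable_diff[OF summable_add[OF sE1 sE2] sE3] sE4] by simp
  also have "\<dots> = suminf (\<lambda>a. 4 * Cf u a - 4 * Df u a)" by (simp only: R2)
  also have "\<dots> = 4 * suminf (Cf u) - 4 * suminf (Df u)"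
    using suminf_diff[OF summable_mult[OF Cf_summable[OF u2], of 4] summable_mult[OF Df_summable[OF u2], of 4]]
      suminf_mult[OF Cf_summable[OF u2], of 4] suminf_mult[OF Df_summable[OF u2], of 4] by simp
  finally have Z: "euler_zeta [u, 1, 1] [1, -1, -1] + euler_zeta [u, 1, 1] [-1, 1, 1]
             - euler_zeta [u, 1, 1] [-1, 1, -1] - euler_zeta [u, 1, 1] [1, -1, 1]
      = 4 * suminf (Cf u) - 4 * suminf (Df u)" .
  show ?thesis unfolding L T2 Z core[OF u2 sP] by (simp add: algebra_simps)
qed

end
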